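(* Let $t\ge 3$ be an integer and let $G=(V,E)$ be a $t$-hypergraph with $|V|=s\ge 2$ vertices and $|E|=m$ hyperedges. Let $k\in\mathbb{N}$ satisfy $2^{t+2}\log(s)\le k\le s$. If \[ m \;\ge\; 3s\left(\frac{2^{t+3}\cdot s\cdot\log(s)}{k}\right)^{t-2}, \] then there exists a subset $S\subseteq V$ with $|S|\le k$ that spans at least $|S| + \frac{k}{2^{t+1}\log(s)}$ hyperedges.
   Context: A $t$-hypergraph is a hypergraph in which every hyperedge is a set of at most $t$ distinct vertices, and parallel (repeated) hyperedges are allowed and counted with multiplicity. A set of vertices $S$ spans a hyperedge $e$ if all vertices of $e$ lie in $S$. Logarithms are base 2. *)

theory Defs
  imports Complex_Main "HOL-Library.Multiset"
begin

definition t_hypergraph :: "nat \<Rightarrow> 'a set \<Rightarrow> 'a set multiset \<Rightarrow> bool" where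
  "t_hypergraph t V E \<longleftrightarrow> finite V \<and> (\<forall>e \<in># E. e \<subseteq> V \<and> card e \<le> t)"

definition spanned :: "'a set multiset \<Rightarrow> 'a set \<Rightarrow> nat" where
  "spanned E S = size (filter_mset (\<lambda>e. e \<subseteq> S) E)"

end

theory Submission
  imports Defs
begin

definition nbh :: "'a set multiset \<Rightarrow> 'a set \<Rightarrow> 'a set" where
  "nbh E B = B \<union> \<Union> {e. e \<in># E \<and> e \<inter> B \<noteq> {}}"

definition graphh :: "'a set \<Rightarrow> 'a set multiset \<Rightarrow> bool" where
  "graphh W E \<longleftrightarrow> finite W \<and> (\<forall>e\<in>#E. e \<subseteq> W \<and> card e \<le> 2)"

definition ball :: "'a set multiset \<Rightarrow> 'a \<Rightarrow> nat \<Rightarrow> 'a set" where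
  "ball E v j = (nbh E ^^ j) {v}"

lemma spanned_mono: "S \<subseteq> S' \<Longrightarrow> spanned E S \<le> spanned E S'"
  unfolding spanned_def by (intro size_mset_mono filter_mset_mono_strong) auto

lemma spanned_sub: "E' \<subseteq># E \<Longrightarrow> spanned E' S \<le> spanned E S"
  unfolding spanned_def by (intro size_mset_mono multiset_filter_mono)

lemma spanned_add: "spanned (add_mset e E) S = spanned E S + (if e \<subseteq> S then 1 else 0)"
  unfolding spanned_def by simp

lemma deg_sum:
  assumes "finite B" "B \<subseteq> B'" "\<forall>e\<in>#E. finite e \<and> card e \<le> 2 \<and> (e \<inter> B \<noteq> {} \<longrightarrow> e \<subseteq> B')"
  shows "(\<Sum>v\<in>B. size (filter_mset (\<lambda>e. v \<in> e) E)) \<le> spanned E B + spanned E B'"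
  using assms(3)
proof (induction E)
  case empty
  show ?case by (simp add: spanned_def)
next
  case (add e E)
  have IH: "(\<Sum>v\<in>B. size (filter_mset (\<lambda>e. v \<in> e) E)) \<le> spanned E B + spanned E B'"
    using add by auto
  have he: "finite e" "card e \<le> 2" "e \<inter> B \<noteq> {} \<longrightarrow> e \<subseteq> B'" using add.prems by auto
  have s1: "(\<Sum>v\<in>B. if v \<in> e then 1 else (0::nat)) = card (B \<inter> e)"
    using assms(1) by (simp add: sum.inter_filter[symmetric] Int_def)
  have eq: "(\<Sum>v\<in>B. size (filter_mset (\<lambda>e'. v \<in> e') (add_mset e E)))
      = (\<Sum>v\<in>B. size (filter_mset (\<lambda>e'. v \<in> e') E)) + card (B \<inter> e)"
  proof -
    have "(\<Sum>v\<in>B. size (filter_mset (\<lambda>e'. v \<in> e') (add_mset e E)))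
      = (\<Sum>v\<in>B. size (filter_mset (\<lambda>e'. v \<in> e') E) + (if v \<in> e then 1 else 0))"
      by (rule sum.cong) auto
    then show ?thesis by (simp only: sum.distrib s1)
  qed
  have loc: "card (B \<inter> e) \<le> (if e \<subseteq> B then 1 else 0) + (if e \<subseteq> B' then 1 else 0)"
  proof (cases "B \<inter> e = {}")
    case True then show ?thesis by simp
  next
    case False
    then have "e \<subseteq> B'" using he by auto
    show ?thesis
    proof (cases "e \<subseteq> B")
      case True
      then show ?thesis using \<open>e \<subseteq> B'\<close> he card_mono[of e "B \<inter> e"] by auto
    next
      case False
      then have "B \<inter> e \<subset> e" by auto
      then have "card (B \<inter> e) < card e" using he psubset_card_mono by blast
      then show ?thesis using he \<open>e \<subseteq> B'\<close> False by auto
    qed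
  qed
  show ?case using IH eq loc by (simp add: spanned_add)
qed

lemma ball_0 [simp]: "ball E v 0 = {v}" by (simp add: ball_def)
lemma ball_Suc: "ball E v (Suc j) = nbh E (ball E v j)" by (simp add: ball_def)

lemma nbh_sub: "graphh W E \<Longrightarrow> B \<subseteq> W \<Longrightarrow> nbh E B \<subseteq> W"
  unfolding nbh_def graphh_def by auto

lemma nbh_sup: "B \<subseteq> nbh E B" unfolding nbh_def by auto

lemma ball_sub: "graphh W E \<Longrightarrow> v \<in> W \<Longrightarrow> ball E v j \<subseteq> W"
  by (induction j) (auto simp: ball_Suc intro: nbh_sub[THEN subsetD])

lemma ball_grow:
  assumes G: "graphh W E" and v: "v \<in> W"
    and deg: "\<forall>w\<in>W. c + 1 \<le> size (filter_mset (\<lambda>e. w \<in> e) E)"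
    and sp: "\<forall>i\<le>j. spanned E (ball E v i) \<le> card (ball E v i)"
  shows "c ^ j \<le> card (ball E v j)"
  using sp
proof (induction j)
  case 0 then show ?case by simp
next
  case (Suc j)
  define B where "B = ball E v j"
  have BW: "B \<subseteq> W" using ball_sub[OF G v] B_def by auto
  have fB: "finite B" using BW G finite_subset unfolding graphh_def by blast
  have IH: "c ^ j \<le> card B" using Suc B_def by auto
  have h: "\<forall>e\<in>#E. finite e \<and> card e \<le> 2 \<and> (e \<inter> B \<noteq> {} \<longrightarrow> e \<subseteq> nbh E B)"
    using G unfolding graphh_def nbh_def by (auto intro: finite_subset)
  have "(c + 1) * card B \<le> (\<Sum>v\<in>B. size (filter_mset (\<lambda>e. v \<in> e) E))"
    using sum_bounded_below[of B "c+1" "\<lambda>v. size (filter_mset (\<lambda>e. v \<in> e) E)"] deg BW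
    by (auto simp: mult.commute)
  also have "\<dots> \<le> spanned E B + spanned E (nbh E B)"
    using deg_sum[OF fB nbh_sup h] .
  also have "\<dots> \<le> card B + card (nbh E B)"
    using Suc.prems B_def ball_Suc[of E v j] by (metis add_le_mono le_Suc_eq order_refl)
  finally have "c * card B \<le> card (nbh E B)" by simp
  then show ?case using IH B_def ball_Suc[of E v j]
    by (metis mult_le_mono2 order_trans power_Suc)
qed
lemma tree:
  assumes G: "graphh W E" and v: "v \<in> W"
  shows "\<exists>T. T \<subseteq># filter_mset (\<lambda>e. e \<subseteq> ball E v j) E \<and> size T + 1 = card (ball E v j) \<and>
     (\<forall>X \<subseteq> ball E v j. \<exists>S. X \<subseteq> S \<and> v \<in> S \<and> S \<subseteq> ball E v j \<and> card S \<le> 1 + card X * j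
        \<and> card S \<le> size (filter_mset (\<lambda>e. e \<subseteq> S) T) + 1)"
proof (induction j)
  case 0
  show ?case
  proof (intro exI[of _ "{#}"] conjI allI impI)
    fix X assume "X \<subseteq> ball E v 0"
    then show "\<exists>S. X \<subseteq> S \<and> v \<in> S \<and> S \<subseteq> ball E v 0 \<and> card S \<le> 1 + card X * 0
        \<and> card S \<le> size (filter_mset (\<lambda>e. e \<subseteq> S) {#}) + 1"
      by (intro exI[of _ "{v}"]) auto
  qed auto
next
  case (Suc j)
  define B where "B = ball E v j"
  define B' where "B' = nbh E B"
  have B'eq: "ball E v (Suc j) = B'" by (simp add: B_def B'_def ball_Suc)
  from Suc obtain T where T1: "T \<subseteq># filter_mset (\<lambda>e. e \<subseteq> B) E" and T2: "size T + 1 = card B"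
    and T3: "\<forall>X \<subseteq> B. \<exists>S. X \<subseteq> S \<and> v \<in> S \<and> S \<subseteq> B \<and> card S \<le> 1 + card X * j
        \<and> card S \<le> size (filter_mset (\<lambda>e. e \<subseteq> S) T) + 1"
    unfolding B_def by blast
  have BW: "B \<subseteq> W" using ball_sub[OF G v] B_def by auto
  have B'W: "B' \<subseteq> W" using nbh_sub[OF G BW] B'_def by auto
  have fW: "finite W" using G graphh_def by auto
  have fB: "finite B" "finite B'" using BW B'W fW finite_subset by auto
  have BB': "B \<subseteq> B'" unfolding B'_def by (rule nbh_sup)
  define N where "N = B' - B"
  have fN: "finite N" using fB N_def by auto
  have ex: "\<forall>w\<in>N. \<exists>u. u \<in> B \<and> {w,u} \<in># E"
  proof
    fix w assume "w \<in> N"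
    then have wB: "w \<notin> B" and "w \<in> B'" using N_def by auto
    then obtain e where e: "e \<in># E" "e \<inter> B \<noteq> {}" "w \<in> e" unfolding B'_def nbh_def by auto
    then obtain u where u: "u \<in> e" "u \<in> B" by auto
    have "u \<noteq> w" using u wB by auto
    have "e \<subseteq> W" "card e \<le> 2" using e G unfolding graphh_def by auto
    then have fe: "finite e" "card e \<le> 2" using fW finite_subset by auto
    have "{w,u} \<subseteq> e" using u e by auto
    moreover have "card {w,u} = 2" using \<open>u \<noteq> w\<close> by auto
    ultimately have "{w,u} = e" using fe card_subset_eq by (metis le_antisym card_mono)
    then show "\<exists>u. u \<in> B \<and> {w,u} \<in># E" using u e by auto
  qed
  then obtain u where u: "\<forall>w\<in>N. u w \<in> B \<and> {w, u w} \<in># E" by metis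
  define pe where "pe w = {w, u w}" for w
  have inj: "inj_on pe N"
  proof (rule inj_onI)
    fix w w' assume "w \<in> N" "w' \<in> N" "pe w = pe w'"
    then have "w \<in> {w', u w'}" unfolding pe_def by auto
    then show "w = w'" using u \<open>w \<in> N\<close> \<open>w' \<in> N\<close> N_def by auto
  qed
  define T' where "T' = T + mset_set (pe ` N)"
  have c1: "T' \<subseteq># filter_mset (\<lambda>e. e \<subseteq> B') E"
  proof (rule mset_subset_eqI)
    fix x
    show "count T' x \<le> count (filter_mset (\<lambda>e. e \<subseteq> B') E) x"
    proof (cases "x \<in> pe ` N")
      case True
      then obtain w where w: "w \<in> N" "x = pe w" by auto
      have "\<not> x \<subseteq> B" using w N_def pe_def by auto
      then have "count T x = 0" using mset_subset_eq_count[OF T1, of x] by simp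
      moreover have "x \<subseteq> B'" using w u N_def pe_def BB' by auto
      moreover have "x \<in># E" using w u pe_def by auto
      ultimately show ?thesis using True fN T'_def by (simp add: Suc_le_eq)
    next
      case False
      have "count T x \<le> count (filter_mset (\<lambda>e. e \<subseteq> B) E) x" using mset_subset_eq_count[OF T1] .
      also have "\<dots> \<le> count (filter_mset (\<lambda>e. e \<subseteq> B') E) x" using BB' by auto
      finally show ?thesis using False fN T'_def by simp
    qed
  qed
  have cB': "card B' = card B + card N" using fB BB' N_def
    by (metis card_Diff_subset add.commute card_mono le_add_diff_inverse)
  have c2: "size T' + 1 = card B'"
    using T2 cB' inj fN card_image[OF inj] T'_def by simp
  have c3: "\<forall>X \<subseteq> B'. \<exists>S. X \<subseteq> S \<and> v \<in> S \<and> S \<subseteq> B' \<and> card S \<le> 1 + card X * Suc j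
        \<and> card S \<le> size (filter_mset (\<lambda>e. e \<subseteq> S) T') + 1"
  proof (intro allI impI)
    fix X assume XB': "X \<subseteq> B'"
    define X1 where "X1 = X \<inter> B"
    define X2 where "X2 = X - B"
    have X2N: "X2 \<subseteq> N" using XB' X2_def N_def by auto
    have fX: "finite X" "finite X1" "finite X2" using XB' fB X1_def X2_def finite_subset by auto
    have cX: "card X = card X1 + card X2"
      using fX X1_def X2_def card_Un_disjoint[of X1 X2] by (metis Int_Diff_Un Int_Diff_disjoint)
    define X' where "X' = X1 \<union> u ` X2"
    have X'B: "X' \<subseteq> B" using X'_def X1_def u X2N by auto
    have cX': "card X' \<le> card X"
      using cX card_Un_le[of X1 "u ` X2"] card_image_le[OF fX(3), of u] unfolding X'_def by linarith
    from T3[rule_format, OF X'B] obtain S' where S': "X' \<subseteq> S'" "v \<in> S'" "S' \<subseteq> B" "card S' \<le> 1 + card X' * j"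
        "card S' \<le> size (filter_mset (\<lambda>e. e \<subseteq> S') T) + 1"
      by blast
    define S where "S = S' \<union> X2"
    have fS': "finite S'" using S' fB finite_subset by auto
    have disj: "S' \<inter> X2 = {}" using S' X2_def by auto
    have cS: "card S = card S' + card X2" using card_Un_disjoint[OF fS' fX(3) disj] S_def by simp
    have d1: "X \<subseteq> S" using S' X'_def X1_def X2_def S_def by auto
    have d2: "S \<subseteq> B'" using S' BB' X2N N_def S_def by auto
    have d3: "card S \<le> 1 + card X * Suc j"
    proof -
      have a: "card X' * j \<le> card X * j" using cX' by (simp add: mult_le_mono1)
      have b: "card X2 \<le> card X" using cX by simp
      have "card S \<le> 1 + card X' * j + card X2" using cS S'(4) by linarith
      also have "\<dots> \<le> 1 + card X * j + card X" using a b by linarith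
      finally show ?thesis by (simp add: algebra_simps)
    qed
    have e1: "size (filter_mset (\<lambda>e. e \<subseteq> S') T) \<le> size (filter_mset (\<lambda>e. e \<subseteq> S) T)"
      by (intro size_mset_mono filter_mset_mono_strong) (auto simp: S_def)
    have sub: "pe ` X2 \<subseteq> {x \<in> pe ` N. x \<subseteq> S}"
      using X2N S' X'_def S_def pe_def by auto
    have "card X2 = card (pe ` X2)" using inj X2N by (metis card_image inj_on_subset)
    also have "\<dots> \<le> card {x \<in> pe ` N. x \<subseteq> S}" using sub fN by (intro card_mono) auto
    also have "\<dots> = size (filter_mset (\<lambda>e. e \<subseteq> S) (mset_set (pe ` N)))" using fN by simp
    finally have e2: "card X2 \<le> size (filter_mset (\<lambda>e. e \<subseteq> S) (mset_set (pe ` N)))" .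
    have d4: "card S \<le> size (filter_mset (\<lambda>e. e \<subseteq> S) T') + 1"
      using e1 e2 cS S' T'_def by simp
    show "\<exists>S. X \<subseteq> S \<and> v \<in> S \<and> S \<subseteq> B' \<and> card S \<le> 1 + card X * Suc j
        \<and> card S \<le> size (filter_mset (\<lambda>e. e \<subseteq> S) T') + 1"
      using d1 d2 d3 d4 S'(2) S_def by (intro exI[of _ S]) auto
  qed
  show ?case unfolding B'eq by (intro exI[of _ T']) (use c1 c2 c3 in simp)
qed

lemma spanned_all: "\<forall>e\<in>#E. e \<subseteq> W \<Longrightarrow> spanned E W = size E"
  unfolding spanned_def by (metis (mono_tags, lifting) filter_mset_cong0 filter_mset_True)

lemma one:
  assumes G: "graphh W E" and c: "2 \<le> c" and R: "card W < c ^ R" and m: "c * card W + 1 \<le> size E"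
  shows "\<exists>S \<subseteq> W. card S \<le> 4*R + 1 \<and> card S + 1 \<le> spanned E S"
proof -
  define P where "P U \<longleftrightarrow> U \<subseteq> W \<and> c * card U + 1 \<le> spanned E U" for U
  have fW: "finite W" using G graphh_def by auto
  have "P W" using m spanned_all[of E W] G unfolding P_def graphh_def by auto
  then obtain U where PU: "P U" and Umin: "\<And>U'. P U' \<Longrightarrow> card U \<le> card U'"
    using ex_has_least_nat[of P W card] by blast
  have UW: "U \<subseteq> W" using PU P_def by auto
  have fU: "finite U" using UW fW finite_subset by auto
  show ?thesis
  proof (cases "U = {}")
    case True
    then show ?thesis using PU P_def by (intro exI[of _ "{}"]) auto
  next
    case False
    then obtain v where vU: "v \<in> U" by auto
    define EU where "EU = filter_mset (\<lambda>e. e \<subseteq> U) E"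
    have GU: "graphh U EU" using G fU unfolding graphh_def EU_def by auto
    have spEU: "spanned EU S = spanned E S" if "S \<subseteq> U" for S
      unfolding spanned_def EU_def filter_filter_mset using that
      by (metis (no_types, lifting) dual_order.trans filter_mset_cong0)
    have deg: "\<forall>w\<in>U. c + 1 \<le> size (filter_mset (\<lambda>e. w \<in> e) EU)"
    proof
      fix w assume wU: "w \<in> U"
      have "\<not> P (U - {w})"
      proof
        assume "P (U - {w})"
        then have "card U \<le> card (U - {w})" using Umin by auto
        moreover have "card U > 0" using wU fU card_gt_0_iff by blast
        ultimately show False using wU fU by simp
      qed
      then have a: "spanned E (U - {w}) \<le> c * (card U - 1)" using UW wU fU unfolding P_def by auto
      have "filter_mset (\<lambda>e. e \<subseteq> U) E = filter_mset (\<lambda>e. w \<in> e) EU + filter_mset (\<lambda>e. \<not> w \<in> e) EU"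
        unfolding EU_def by (rule multiset_partition)
      moreover have "filter_mset (\<lambda>e. \<not> w \<in> e) EU = filter_mset (\<lambda>e. e \<subseteq> U - {w}) E"
        unfolding EU_def filter_filter_mset by (rule filter_mset_cong0) auto
      ultimately have b: "spanned E U = size (filter_mset (\<lambda>e. w \<in> e) EU) + spanned E (U - {w})"
        unfolding spanned_def by (metis size_union)
      have "card U \<ge> 1" using wU fU by (metis One_nat_def Suc_leI card_gt_0_iff empty_iff)
      then have "c * card U = c * (card U - 1) + c" by (metis add.commute le_add_diff_inverse mult_Suc_right Suc_eq_plus1 add_diff_cancel_left' diff_Suc_1 )
      moreover have "c * card U + 1 \<le> spanned E U" using PU P_def by auto
      ultimately show "c + 1 \<le> size (filter_mset (\<lambda>e. w \<in> e) EU)" using a b by linarith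
    qed
    have "\<exists>i\<le>R. card (ball EU v i) + 1 \<le> spanned EU (ball EU v i)"
    proof (rule ccontr)
      assume "\<not> ?thesis"
      then have "\<forall>i\<le>R. spanned EU (ball EU v i) \<le> card (ball EU v i)" by fastforce
      then have "c ^ R \<le> card (ball EU v R)" using ball_grow[OF GU vU deg] by blast
      moreover have "card (ball EU v R) \<le> card U" using ball_sub[OF GU vU] fU card_mono by blast
      ultimately show False using R card_mono[OF fW UW] by linarith
    qed
    then obtain i where iR: "i \<le> R" and spB: "card (ball EU v i) + 1 \<le> spanned EU (ball EU v i)" by blast
    define B where "B = ball EU v i"
    have BU: "B \<subseteq> U" using ball_sub[OF GU vU] B_def by auto
    obtain T where T1: "T \<subseteq># filter_mset (\<lambda>e. e \<subseteq> B) EU" and T2: "size T + 1 = card B"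
      and T3: "\<forall>X \<subseteq> B. \<exists>S. X \<subseteq> S \<and> v \<in> S \<and> S \<subseteq> B \<and> card S \<le> 1 + card X * i
        \<and> card S \<le> size (filter_mset (\<lambda>e. e \<subseteq> S) T) + 1"
      using tree[OF GU vU, of i] unfolding B_def by blast
    define F where "F = filter_mset (\<lambda>e. e \<subseteq> B) EU"
    define D where "D = F - T"
    have sD: "size D \<ge> 2" using spB T2 T1 size_Diff_submset[of T F] unfolding D_def F_def B_def spanned_def
      by linarith
    have "D \<noteq> {#}" using sD by auto
    then obtain e1 where e1: "e1 \<in># D" by (meson multiset_nonemptyE)
    have "size (D - {#e1#}) \<ge> 1" using sD e1 by (simp add: size_Diff_singleton)
    then have "D - {#e1#} \<noteq> {#}" by auto
    then obtain e2 where e2: "e2 \<in># D - {#e1#}" by (meson multiset_nonemptyE)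
    have sub2: "{#e1, e2#} \<subseteq># D" using e1 e2 by (simp add: insert_subset_eq_iff)
    have sub3: "T + {#e1, e2#} \<subseteq># F" using sub2 T1 unfolding D_def F_def
      by (metis subset_mset.add_diff_inverse subset_mset.add_le_cancel_left add.commute)
    have e12: "e1 \<in># F" "e2 \<in># F" using sub3 by (auto dest: mset_subset_eqD)
    then have e12B: "e1 \<subseteq> B" "e2 \<subseteq> B" unfolding F_def by auto
    have e12fin: "finite e1" "finite e2" "card e1 \<le> 2" "card e2 \<le> 2"
      using e12B BU fU finite_subset e12 GU unfolding F_def graphh_def by (auto intro: finite_subset)
    define X where "X = e1 \<union> e2"
    have cX: "card X \<le> 4" using card_Un_le[of e1 e2] e12fin unfolding X_def by linarith
    obtain S where S: "X \<subseteq> S" "S \<subseteq> B" "card S \<le> 1 + card X * i"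
        "card S \<le> size (filter_mset (\<lambda>e. e \<subseteq> S) T) + 1"
      using T3[rule_format, of X] X_def e12B by blast
    have "card S \<le> 4 * R + 1"
    proof -
      have "card X * i \<le> 4 * R" using cX iR mult_le_mono by blast
      then show ?thesis using S(3) by linarith
    qed
    moreover have "S \<subseteq> W" using S BU UW by auto
    moreover have "card S + 1 \<le> spanned E S"
    proof -
      have "filter_mset (\<lambda>e. e \<subseteq> S) (T + {#e1, e2#}) = filter_mset (\<lambda>e. e \<subseteq> S) T + {#e1, e2#}"
        using S(1) X_def by auto
      then have "size (filter_mset (\<lambda>e. e \<subseteq> S) (T + {#e1, e2#})) = size (filter_mset (\<lambda>e. e \<subseteq> S) T) + 2"
        by simp
      moreover have "T + {#e1, e2#} \<subseteq># E" using sub3 unfolding F_def EU_def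
        by (meson multiset_filter_subset subset_mset.order_trans)
      ultimately have "size (filter_mset (\<lambda>e. e \<subseteq> S) T) + 2 \<le> spanned E S"
        unfolding spanned_def by (metis multiset_filter_mono size_mset_mono)
      then show ?thesis using S(4) by linarith
    qed
    ultimately show ?thesis by blast
  qed
qed

definition contr :: "'a set multiset \<Rightarrow> 'a set \<Rightarrow> 'a set multiset" where
  "contr E U = image_mset (\<lambda>e. e - U) (filter_mset (\<lambda>e. \<not> e \<subseteq> U) E)"

lemma contr_graph: assumes "graphh W E" shows "graphh (W - U) (contr E U)"
proof -
  have a: "finite W" "\<forall>e\<in>#E. e \<subseteq> W \<and> card e \<le> 2" using assms graphh_def by auto
  have "e - U \<subseteq> W - U \<and> card (e - U) \<le> 2" if "e \<in># E" for e
  proof -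
    have "e \<subseteq> W" "card e \<le> 2" using a that by auto
    moreover have "finite e" using \<open>e \<subseteq> W\<close> a(1) by (rule finite_subset)
    ultimately show ?thesis using card_mono[of e "e - U"] by auto
  qed
  then show ?thesis unfolding graphh_def contr_def using a by auto
qed

lemma contr_size: "size (contr E U) + spanned E U = size E"
  unfolding contr_def spanned_def using multiset_partition[of E "\<lambda>e. e \<subseteq> U"]
  by (metis add.commute size_image_mset size_union)

lemma contr_spanned: "spanned E (U \<union> B) = spanned E U + spanned (contr E U) B"
proof -
  have "filter_mset (\<lambda>e. e \<subseteq> U \<union> B) E
     = filter_mset (\<lambda>e. e \<subseteq> U) (filter_mset (\<lambda>e. e \<subseteq> U \<union> B) E) + filter_mset (\<lambda>e. \<not> e \<subseteq> U) (filter_mset (\<lambda>e. e \<subseteq> U \<union> B) E)"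
    by (rule multiset_partition)
  moreover have "filter_mset (\<lambda>e. e \<subseteq> U) (filter_mset (\<lambda>e. e \<subseteq> U \<union> B) E) = filter_mset (\<lambda>e. e \<subseteq> U) E"
    unfolding filter_filter_mset by (rule filter_mset_cong0) auto
  moreover have "filter_mset (\<lambda>e. \<not> e \<subseteq> U) (filter_mset (\<lambda>e. e \<subseteq> U \<union> B) E)
      = filter_mset (\<lambda>e. e - U \<subseteq> B) (filter_mset (\<lambda>e. \<not> e \<subseteq> U) E)"
    unfolding filter_filter_mset by (rule filter_mset_cong0) auto
  moreover have "spanned (contr E U) B = size (filter_mset (\<lambda>e. e - U \<subseteq> B) (filter_mset (\<lambda>e. \<not> e \<subseteq> U) E))"
    unfolding spanned_def contr_def filter_mset_image_mset by simp
  ultimately show ?thesis unfolding spanned_def by (metis size_union)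
qed

lemma iter:
  assumes G: "graphh W E" and R: "card W < 2 ^ R" and m: "2 * card W + q * (4*R+2) + 1 \<le> size E"
  shows "\<exists>U \<subseteq> W. card U \<le> q * (4*R+1) \<and> card U + q \<le> spanned E U"
proof -
  define b where "b = 4*R+1"
  have fW: "finite W" using G graphh_def by auto
  have "\<forall>j\<le>q. \<exists>U \<subseteq> W. card U \<le> j * b \<and> card U + j \<le> spanned E U"
  proof (intro allI impI)
    fix j assume "j \<le> q"
    then show "\<exists>U \<subseteq> W. card U \<le> j * b \<and> card U + j \<le> spanned E U"
    proof (induction j)
      case 0
      show ?case by (intro exI[of _ "{}"]) auto
    next
      case (Suc j)
      then obtain U where U: "U \<subseteq> W" "card U \<le> j * b" "card U + j \<le> spanned E U" by auto
      show ?case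
      proof (cases "card U + Suc j \<le> spanned E U")
        case True
        then show ?thesis using U by (intro exI[of _ U]) auto
      next
        case False
        then have spU: "spanned E U \<le> j * b + j" using U by linarith
        define E' where "E' = contr E U"
        have G': "graphh (W - U) E'" using contr_graph[OF G] E'_def by auto
        have cWU: "card (W - U) \<le> card W" using fW by (simp add: card_Diff_subset U(1) card_mono)
        have sE': "size E' + spanned E U = size E" using contr_size E'_def by auto
        have "j * b + j + 2 * card (W - U) + 1 \<le> 2 * card W + q * (4*R+2) + 1"
        proof -
          have "j * b + j = j * (4*R+2)" using b_def by (simp add: algebra_simps)
          also have "\<dots> \<le> q * (4*R+2)" using Suc.prems by (intro mult_le_mono1) auto
          finally show ?thesis using cWU by linarith
        qed
        then have m': "2 * card (W - U) + 1 \<le> size E'" using sE' spU m by linarith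
        obtain B where B: "B \<subseteq> W - U" "card B \<le> 4*R+1" "card B + 1 \<le> spanned E' B"
          using one[OF G' _ _ m', of R] R cWU by auto
        have fU: "finite U" using U fW finite_subset by auto
        have fB: "finite B" using B fW finite_subset by auto
        have cUB: "card (U \<union> B) = card U + card B" using B fU fB card_Un_disjoint by blast
        have "spanned E (U \<union> B) = spanned E U + spanned E' B" using contr_spanned E'_def by auto
        then show ?thesis using U B cUB b_def by (intro exI[of _ "U \<union> B"]) auto
      qed
    qed
  qed
  then show ?thesis using b_def by auto
qed


lemma binom_mono: "(n choose k) \<le> ((n + j) choose (k + j))"
proof (induction j)
  case 0 then show ?case by simp
next
  case (Suc j)
  then show ?case by (simp add: add.commute[of _ "Suc j"] le_add1 trans_le_add1)
qed

lemma binom_ratio: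
  assumes "a \<le> r" "r \<le> s" "0 < s"
  shows "real (s choose r) * (real (r - a + 1) / real s) ^ a \<le> real ((s - a) choose (r - a))"
  using assms(1)
proof (induction a)
  case 0 then show ?case by simp
next
  case (Suc a)
  have IH: "real (s choose r) * (real (r - a + 1) / real s) ^ a \<le> real ((s - a) choose (r - a))"
    using Suc by auto
  have ra: "0 < r - a" using Suc by auto
  have sa: "0 < s - a" "s - a \<le> s" using Suc assms by auto
  have id: "(r - a) * ((s - a) choose (r - a)) = (s - a) * ((s - a - 1) choose (r - a - 1))"
    using times_binomial_minus1_eq[OF ra] by simp
  have id': "real ((s - Suc a) choose (r - Suc a)) = real ((s - a) choose (r - a)) * real (r - a) / real (s - a)"
  proof -
    have "real (r - a) * real ((s - a) choose (r - a)) = real (s - a) * real ((s - a - 1) choose (r - a - 1))"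
      using id by (metis of_nat_mult)
    then show ?thesis using sa by (simp add: field_simps)
  qed
  have A: "real ((s - a) choose (r - a)) * real (r - a) / real (s - a) \<ge> real ((s - a) choose (r - a)) * real (r - a) / real s"
    using sa assms by (intro divide_left_mono) auto
  have B: "(real (r - a + 1) / real s) ^ a \<ge> (real (r - a) / real s) ^ a"
    using assms by (intro power_mono divide_right_mono) auto
  have "real (s choose r) * (real (r - Suc a + 1) / real s) ^ Suc a
      = real (s choose r) * (real (r - a) / real s) ^ a * (real (r - a) / real s)"
    using ra by (simp add: Suc_diff_Suc)
  also have "\<dots> \<le> real (s choose r) * (real (r - a + 1) / real s) ^ a * (real (r - a) / real s)"
    using B by (intro mult_right_mono mult_left_mono) auto
  also have "\<dots> \<le> real ((s - a) choose (r - a)) * (real (r - a) / real s)"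
    using IH by (intro mult_right_mono) auto
  also have "\<dots> \<le> real ((s - Suc a) choose (r - Suc a))" using A id' by simp
  finally show ?case .
qed

lemma count_sup:
  assumes fV: "finite V" and AV: "A \<subseteq> V" and Ar: "card A \<le> r"
  shows "((card V - card A) choose (r - card A)) \<le> card {R. R \<subseteq> V \<and> card R = r \<and> A \<subseteq> R}"
proof -
  have fA: "finite A" using AV fV finite_subset by auto
  have "((card V - card A) choose (r - card A)) = card {B. B \<subseteq> V - A \<and> card B = r - card A}"
    using n_subsets[of "V - A" "r - card A"] fV AV by (simp add: card_Diff_subset fA)
  also have "\<dots> = card ((\<lambda>B. B \<union> A) ` {B. B \<subseteq> V - A \<and> card B = r - card A})"
  proof (rule card_image[symmetric], rule inj_onI)
    fix B B' assume a: "B \<in> {B. B \<subseteq> V - A \<and> card B = r - card A}" "B' \<in> {B. B \<subseteq> V - A \<and> card B = r - card A}"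
      and eq: "B \<union> A = B' \<union> A"
    have "B = (B \<union> A) - A" "B' = (B' \<union> A) - A" using a by auto
    then show "B = B'" using eq by metis
  qed
  also have "\<dots> \<le> card {R. R \<subseteq> V \<and> card R = r \<and> A \<subseteq> R}"
  proof (rule card_mono)
    show "finite {R. R \<subseteq> V \<and> card R = r \<and> A \<subseteq> R}"
      by (rule finite_subset[of _ "Pow V"]) (use fV in auto)
    show "(\<lambda>B. B \<union> A) ` {B. B \<subseteq> V - A \<and> card B = r - card A} \<subseteq> {R. R \<subseteq> V \<and> card R = r \<and> A \<subseteq> R}"
    proof
      fix R assume "R \<in> (\<lambda>B. B \<union> A) ` {B. B \<subseteq> V - A \<and> card B = r - card A}"
      then obtain B where B: "B \<subseteq> V - A" "card B = r - card A" "R = B \<union> A" by auto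
      have fB: "finite B" using B fV finite_subset by auto
      have "B \<inter> A = {}" using B by auto
      then have "card R = card B + card A" using B(3) card_Un_disjoint[OF fB fA] by simp
      then show "R \<in> {R. R \<subseteq> V \<and> card R = r \<and> A \<subseteq> R}" using B AV Ar by auto
    qed
  qed
  finally show ?thesis .
qed

lemma avg:
  fixes E :: "'a set multiset"
  assumes fV: "finite V" and eV: "\<forall>e\<in>#E. e \<subseteq> V \<and> card e \<le> a + 2" and ar: "a \<le> r" "r \<le> card V"
  shows "\<exists>R \<subseteq> V. card R = r \<and> size E * ((card V - a) choose (r - a))
           \<le> size (filter_mset (\<lambda>e. card (e - R) \<le> 2) E) * (card V choose r)"
proof -
  define RR where "RR = {R. R \<subseteq> V \<and> card R = r}"
  define C where "C = ((card V - a) choose (r - a))"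
  define G where "G R = size (filter_mset (\<lambda>e. card (e - R) \<le> 2) E)" for R
  have fRR: "finite RR" unfolding RR_def by (rule finite_subset[of _ "Pow V"]) (use fV in auto)
  have cRR: "card RR = card V choose r" using n_subsets[OF fV] RR_def by simp
  have key: "\<forall>e\<in>#E. e \<subseteq> V \<and> card e \<le> a + 2 \<Longrightarrow> size E * C \<le> (\<Sum>R\<in>RR. size (filter_mset (\<lambda>e. card (e - R) \<le> 2) E))"
  proof (induction E)
    case empty then show ?case by simp
  next
    case (add e E)
    have IH: "size E * C \<le> (\<Sum>R\<in>RR. size (filter_mset (\<lambda>e. card (e - R) \<le> 2) E))"
      using add.IH add.prems by simp
    have eV': "e \<subseteq> V" "card e \<le> a + 2" using add.prems by auto
    have fe: "finite e" using eV' fV finite_subset by auto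
    obtain A where A: "A \<subseteq> e" "card A = card e - 2"
      using obtain_subset_with_card_n[of "card e - 2" e] by auto
    have AV: "A \<subseteq> V" using A eV' by auto
    have cA: "card A \<le> a" "card A \<le> r" using A eV' ar by auto
    have "C \<le> ((card V - card A) choose (r - card A))"
    proof -
      have "(card V - card A) = (card V - a) + (a - card A)" "r - card A = (r - a) + (a - card A)"
        using cA ar by auto
      then show ?thesis unfolding C_def using binom_mono by metis
    qed
    also have "\<dots> \<le> card {R. R \<subseteq> V \<and> card R = r \<and> A \<subseteq> R}" using count_sup[OF fV AV cA(2)] .
    also have "\<dots> \<le> card {R \<in> RR. card (e - R) \<le> 2}"
    proof (rule card_mono)
      show "finite {R \<in> RR. card (e - R) \<le> 2}" using fRR by auto
      show "{R. R \<subseteq> V \<and> card R = r \<and> A \<subseteq> R} \<subseteq> {R \<in> RR. card (e - R) \<le> 2}"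
      proof
        fix R assume R: "R \<in> {R. R \<subseteq> V \<and> card R = r \<and> A \<subseteq> R}"
        have "card (e - R) \<le> card (e - A)" using R fe by (intro card_mono) auto
        also have "\<dots> = card e - card A" using A fe by (simp add: card_Diff_subset finite_subset)
        finally show "R \<in> {R \<in> RR. card (e - R) \<le> 2}" using R A RR_def by auto
      qed
    qed
    finally have ce: "C \<le> card {R \<in> RR. card (e - R) \<le> 2}" .
    have "(\<Sum>R\<in>RR. size (filter_mset (\<lambda>e. card (e - R) \<le> 2) (add_mset e E))) = (\<Sum>R\<in>RR. size (filter_mset (\<lambda>e. card (e - R) \<le> 2) E) + (if card (e - R) \<le> 2 then 1 else 0))"
      by (rule sum.cong) auto
    also have "\<dots> = (\<Sum>R\<in>RR. size (filter_mset (\<lambda>e. card (e - R) \<le> 2) E)) + card {R \<in> RR. card (e - R) \<le> 2}"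
      using fRR by (simp add: sum.distrib sum.inter_filter[symmetric])
    finally show ?case using IH ce by simp
  qed
  have S: "size E * C \<le> (\<Sum>R\<in>RR. G R)" using key eV unfolding G_def by blast
  have pos: "0 < card V choose r" using ar by simp
  then have ne: "RR \<noteq> {}" using cRR by auto
  show ?thesis
  proof (rule ccontr)
    assume "\<not> ?thesis"
    then have lt: "\<forall>R\<in>RR. G R * (card V choose r) < size E * C" unfolding RR_def G_def C_def by auto
    have "(\<Sum>R\<in>RR. G R) * (card V choose r) = (\<Sum>R\<in>RR. G R * (card V choose r))" by (simp add: sum_distrib_right)
    also have "\<dots> < (\<Sum>R\<in>RR. size E * C)" using lt fRR ne by (intro sum_strict_mono) auto
    also have "\<dots> = (card V choose r) * (size E * C)" using cRR by simp
    finally have X: "(\<Sum>R\<in>RR. G R) * (card V choose r) < (card V choose r) * (size E * C)" .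
    have "(size E * C) * (card V choose r) \<le> (\<Sum>R\<in>RR. G R) * (card V choose r)"
      using S by (rule mult_le_mono1)
    moreover have "size E * C * (card V choose r) = (card V choose r) * (size E * C)" by (simp only: ac_simps)
    ultimately show False using X by linarith
  qed
qed

lemma l2: "(32::nat) \<le> s \<Longrightarrow> 5 \<le> log 2 (real s)"
  by (subst le_log_iff) (auto simp: powr_numeral)
lemma l3: "(1::nat) \<le> s \<Longrightarrow> real s < 2 ^ (nat \<lfloor>log 2 (real s)\<rfloor> + 1)"
proof -
  assume s: "1 \<le> s"
  have L0: "0 \<le> log 2 (real s)" using s by simp
  have "real s = 2 powr (log 2 (real s))" using s by simp
  also have "\<dots> < 2 powr (real (nat \<lfloor>log 2 (real s)\<rfloor> + 1))"
    using L0 by (intro powr_less_mono) linarith+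
  also have "\<dots> = 2 ^ (nat \<lfloor>log 2 (real s)\<rfloor> + 1)" by (rule powr_realpow) simp
  finally show ?thesis .
qed

lemma budget_real:
  fixes P L k r q b d a :: real
  assumes P: "P \<ge> 16" and L: "L \<ge> 5" and k: "k \<ge> 2*P*L" and r: "r \<le> 2*k/(4*P*L) + a"
    and q: "q \<le> r + d + 1" and d: "d = k/(P*L)" and b: "b \<le> 4*L+5"
    and nn: "0 \<le> r" "0 \<le> q" "0 \<le> b" "0 \<le> a" and a: "384*a \<le> 44*P"
  shows "r + q*b \<le> k"
proof -
  have "2*P*L \<ge> 0" using P L by simp
  then have Lp: "L > 0" "P > 0" "k \<ge> 0" using P L k by linarith+
  have kk: "P*L \<le> k/2" using k by simp
  have h1: "q*b \<le> (r+d+1)*(5*L)"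
    using q b L nn by (intro mult_mono) auto
  have "5*L*d = 5*k/P" using d Lp by (simp add: field_simps)
  also have "\<dots> \<le> 5*k/16" using P Lp by (intro divide_left_mono) auto
  finally have h2: "5*L*d \<le> 5*k/16" .
  have "L \<le> k/(2*P)" using kk Lp by (simp add: field_simps)
  also have "\<dots> \<le> k/32" using P Lp by (intro divide_left_mono) auto
  finally have h3: "5*L \<le> 5*k/32" by simp
  have "1*r \<le> L*r" using nn L by (intro mult_right_mono) auto
  then have h4: "r*(1+5*L) \<le> 6*L*r" by (simp add: algebra_simps)
  have "6*L*r \<le> 6*L*(2*k/(4*P*L) + a)" using r L by (intro mult_left_mono) auto
  also have "\<dots> = 3*k/P + 6*L*a" using Lp by (simp add: field_simps)
  also have "3*k/P \<le> 3*k/16" using P Lp by (intro divide_left_mono) auto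
  then have "3*k/P + 6*L*a \<le> 3*k/16 + 6*L*a" by simp
  finally have h5: "6*L*r \<le> 3*k/16 + 6*L*a" .
  have "6*L*a \<le> 6*L*(44*P/384)" using a L by (intro mult_left_mono) auto
  also have "\<dots> = (11/16)*(P*L)" by simp
  also have "\<dots> \<le> (11/16)*(k/2)" using kk by (intro mult_left_mono) auto
  finally have h6: "6*L*a \<le> 11*k/32" by simp
  have "r + q*b \<le> r + (r+d+1)*(5*L)" using h1 by simp
  also have "\<dots> = r*(1+5*L) + 5*L*d + 5*L" by (simp add: algebra_simps)
  finally show ?thesis using h2 h3 h4 h5 h6 by linarith
qed

lemma G_bound:
  fixes G m s X y :: real and a :: nat
  assumes "m \<ge> 3*s*X^a" "G \<ge> m * y^a" "y \<ge> 2/X" "X > 0" "s \<ge> 0" "a \<ge> 1"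
  shows "G \<ge> 6*s"
proof -
  have y0: "y \<ge> 0" using assms by (smt (verit) divide_pos_pos)
  have "0 \<le> 3*s*X^a" using assms by simp
  then have m0: "0 \<le> m" using assms by linarith
  have "3*s*2 \<le> 3*s*2^a" using assms by (intro mult_left_mono) (auto simp: self_le_power)
  also have "\<dots> = 3*s*(X*(2/X))^a" using assms by simp
  also have "\<dots> = 3*s*X^a * (2/X)^a" by (simp only: power_mult_distrib mult.assoc)
  also have "\<dots> \<le> m * y^a"
    using assms y0 m0 by (intro mult_mono power_mono) auto
  finally show ?thesis using assms by linarith
qed

lemma a384: "3 \<le> t \<Longrightarrow> 384 * (t - 2) \<le> 44 * 2 ^ (t + 1::nat)"
proof -
  assume "3 \<le> t"
  then obtain n where n: "t = n + 3" by (metis add.commute le_add_diff_inverse)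
  have "n + 1 \<le> (2::nat) ^ n" using less_exp[of n] by (simp add: Suc_le_eq)
  then have "384 * (n + 1) \<le> 384 * (2::nat) ^ n" by (rule mult_le_mono2)
  then have "384 * (n + 1) \<le> 704 * (2::nat) ^ n" by linarith
  then show ?thesis using n by (simp add: power_add)
qed

lemma span_red: "spanned (image_mset (\<lambda>e. e - R) (filter_mset P E)) U \<le> spanned E (R \<union> U)"
  unfolding spanned_def filter_mset_image_mset size_image_mset filter_filter_mset
  by (intro size_mset_mono filter_mset_mono_strong) auto

theorem theorem1p2:
  fixes t s k :: nat and V :: "'a set" and E :: "'a set multiset"
  assumes "t \<ge> 3"
    and "t_hypergraph t V E"
    and "card V = s" and "s \<ge> 2"
    and "2 ^ (t + 2) * log 2 (real s) \<le> real k" and "k \<le> s"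
    and "real (size E) \<ge> 3 * real s * ((2 ^ (t + 3) * real s * log 2 (real s)) / real k) ^ (t - 2)"
  shows "\<exists>S \<subseteq> V. card S \<le> k \<and>
           real (spanned E S) \<ge> real (card S) + real k / (2 ^ (t + 1) * log 2 (real s))"
proof -
  define L where "L = log 2 (real s)"
  define a where "a = t - 2"
  define P where "P = (2::real) ^ (t + 1)"
  have fV: "finite V" and eV: "\<forall>e\<in>#E. e \<subseteq> V \<and> card e \<le> t"
    using assms(2) unfolding t_hypergraph_def by auto
  have L1: "L \<ge> 1" using assms(4) L_def by simp
  have "(2::real) ^ 4 \<le> 2 ^ (t + 1)" using assms(1) by (intro power_increasing) auto
  then have P16: "P \<ge> 16" using P_def by simp
  have P2: "(2::real) ^ (t + 2) = 2 * P" "(2::real) ^ (t + 3) = 4 * P" using P_def by (simp_all add: power_add)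
  have "2 ^ (t + 2) * L \<le> real k" using assms(5) unfolding L_def .
  then have hk: "2 * P * L \<le> real k" by (simp only: P2(1))
  have s32: "32 \<le> s"
  proof (rule ccontr)
    assume "\<not> 32 \<le> s"
    then have "real s < 32" by simp
    moreover have "32 \<le> 2 * P * L"
    proof -
      have "32 * 1 \<le> (2 * P) * L" using P16 L1 by (intro mult_mono) auto
      then show ?thesis by simp
    qed
    ultimately show False using hk assms(6) by linarith
  qed
  have L5: "L \<ge> 5" using l2[OF s32] L_def by simp
  have PL: "P * L > 0" using P16 L5 by simp
  have kpos: "real k > 0" using hk PL by linarith
  define x where "x = 4 * P * L"
  have xpos: "x > 0" using PL unfolding x_def by (simp add: mult.assoc)
  have kx: "2 * real k / x \<ge> 1" using hk xpos x_def by (simp add: field_simps)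
  define r0 where "r0 = nat \<lceil>2 * real k / x\<rceil>"
  have r0a: "real r0 \<ge> 2 * real k / x" "real r0 \<le> 2 * real k / x + 1" unfolding r0_def using kx by linarith+
  have r0b: "r0 \<ge> 1" using r0a kx by linarith
  define r where "r = r0 + a - 1"
  have ra: "a \<le> r" "r - a + 1 = r0" using r0b r_def by auto
  have rreal: "real r \<le> 2 * real k / (4 * P * L) + real a" using r0a r0b r_def x_def by (simp add: of_nat_diff)
  define Rb where "Rb = nat \<lfloor>L\<rfloor> + 1"
  have Rb1: "real s < 2 ^ Rb" using l3[of s] assms(4) Rb_def L_def by simp
  have Rb2: "real Rb \<le> L + 1" using L1 Rb_def by linarith
  define b where "b = 4 * Rb + 1"
  have breal: "real b \<le> 4 * L + 5" using Rb2 b_def by simp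
  define d where "d = real k / (2 ^ (t + 1) * log 2 (real s))"
  have dP: "d = real k / (P * L)" using d_def P_def L_def by simp
  have d0: "d \<ge> 0" using dP kpos PL by simp
  define q where "q = nat \<lceil>real r + d\<rceil>"
  have q: "real q \<le> real r + d + 1" "real q \<ge> real r + d" unfolding q_def using d0 by linarith+
  have a384': "384 * real a \<le> 44 * P"
  proof -
    have "384 * a \<le> 44 * 2 ^ (t + 1)" using a384[OF assms(1)] a_def by simp
    then have "real (384 * a) \<le> real (44 * 2 ^ (t + 1))" by (simp only: of_nat_le_iff)
    then show ?thesis using P_def by simp
  qed
  have budr: "real r + real q * real b \<le> real k"
    using budget_real[OF P16 L5 hk rreal q(1) dP breal _ _ _ _ a384'] by simp
  then have bud: "r + q * b \<le> k"
    by (metis of_nat_add of_nat_le_iff of_nat_mult)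
  have rs: "r \<le> s" using bud assms(6) by linarith
  have ta: "t = a + 2" using assms(1) a_def by simp
  have eV': "\<forall>e\<in>#E. e \<subseteq> V \<and> card e \<le> a + 2" using eV ta by simp
  obtain R where R: "R \<subseteq> V" "card R = r"
    and Rm: "size E * ((card V - a) choose (r - a)) \<le> size (filter_mset (\<lambda>e. card (e - R) \<le> 2) E) * (card V choose r)"
    using avg[OF fV eV' ra(1)] rs assms(3) by auto
  define Gn where "Gn = size (filter_mset (\<lambda>e. card (e - R) \<le> 2) E)"
  have spos: "0 < s" using assms(4) by simp
  have br: "real (s choose r) * (real r0 / real s) ^ a \<le> real ((s - a) choose (r - a))"
    using binom_ratio[OF ra(1) rs spos] unfolding ra(2) .
  have Cpos: "real (s choose r) > 0" using rs by simp
  have "real (size E) * (real (s choose r) * (real r0 / real s) ^ a) \<le> real (size E) * real ((s - a) choose (r - a))"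
    using br by (intro mult_left_mono) auto
  also have "\<dots> \<le> real Gn * real (s choose r)"
    using Rm assms(3) Gn_def by (metis of_nat_le_iff of_nat_mult)
  finally have "real (s choose r) * (real (size E) * (real r0 / real s) ^ a) \<le> real (s choose r) * real Gn"
    by (simp add: algebra_simps)
  then have Gm: "real (size E) * (real r0 / real s) ^ a \<le> real Gn"
    using Cpos by (simp add: mult_le_cancel_left_pos)
  define X where "X = x * real s / real k"
  have Xpos: "X > 0" using X_def xpos spos kpos by simp
  have mX: "real (size E) \<ge> 3 * real s * X ^ a"
  proof -
    have Xeq: "X = 2 ^ (t + 3) * real s * log 2 (real s) / real k"
      unfolding X_def x_def L_def P2(2) by (simp add: ac_simps)
    show ?thesis using assms(7) unfolding Xeq a_def .
  qed
  have yX: "real r0 / real s \<ge> 2 / X"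
  proof -
    have "2 / X = (2 * real k / x) / real s" unfolding X_def using xpos spos kpos by (simp add: field_simps)
    also have "\<dots> \<le> real r0 / real s" using r0a spos by (intro divide_right_mono) auto
    finally show ?thesis .
  qed
  have a1: "a \<ge> 1" using assms(1) a_def by simp
  have G6: "real Gn \<ge> 6 * real s"
    using G_bound[OF mX Gm yX Xpos _ a1] by simp
  define W where "W = V - R"
  define EG where "EG = image_mset (\<lambda>e. e - R) (filter_mset (\<lambda>e. card (e - R) \<le> 2) E)"
  have GW: "graphh W EG" unfolding graphh_def W_def EG_def using fV eV by auto
  have sEG: "size EG = Gn" unfolding EG_def Gn_def by simp
  have cW: "card W \<le> s" unfolding W_def using fV assms(3) by (metis Diff_subset card_mono)
  have cW2: "card W < 2 ^ Rb"
  proof -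
    have "real (card W) < 2 ^ Rb" using cW Rb1 by linarith
    then show ?thesis by (metis of_nat_less_iff of_nat_numeral of_nat_power)
  qed
  have bq: "q \<le> q * b" using b_def by simp
  have req: "2 * card W + q * (4 * Rb + 2) + 1 \<le> size EG"
  proof -
    have "q * (4 * Rb + 2) = q * b + q" using b_def by (simp add: algebra_simps)
    also have "\<dots> \<le> 2 * k" using bud bq by linarith
    finally have "2 * card W + q * (4 * Rb + 2) + 1 \<le> 4 * s + 1" using cW assms(6) by linarith
    moreover have "real (4 * s + 1) \<le> real Gn" using G6 assms(4) by simp
    ultimately show ?thesis using sEG by linarith
  qed
  obtain U where U: "U \<subseteq> W" "card U \<le> q * (4 * Rb + 1)" "card U + q \<le> spanned EG U"
    using iter[OF GW cW2 req] by blast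
  define S where "S = R \<union> U"
  have fR: "finite R" "finite U" using R(1) U(1) fV W_def by (auto intro: finite_subset)
  have disj: "R \<inter> U = {}" using U(1) W_def by auto
  have cS: "card S = r + card U" using card_Un_disjoint[OF fR disj] S_def R(2) by simp
  have SV: "S \<subseteq> V" using R(1) U(1) W_def S_def by auto
  have Sk: "card S \<le> k" using cS U(2) bud unfolding b_def by linarith
  have "spanned EG U \<le> spanned E S" unfolding EG_def S_def by (rule span_red)
  then have "real (card U + q) \<le> real (spanned E S)" using U(3) by linarith
  then have "real (card S) + d \<le> real (spanned E S)" using cS q(2) by simp
  then show ?thesis using SV Sk d_def by blast
qed

end
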